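(* Let $R$ be a commutative ring, $M$ a locally free $R$-module of rank 2, $N$ a locally free $R$-module of rank 1, and $q:M\to N$ a quadratic map (in the sense of Kneser) with corresponding element $f\in\mathrm{Sym}^2M^*\otimes N$. Then $q$ is primitive in the sense of Kneser if and only if the linear binary quadratic form $f$ is primitive.
   Context: A quadratic map $q:M\to N$ is a map of sets with $q(rm)=r^2q(m)$ for $r\in R$, $m\in M$, such that $B(x,y)=q(x+y)-q(x)-q(y)$ is $R$-bilinear. It is primitive (Kneser) if $q(M)$ generates $N$ as an $R$-module. The corresponding $f\in\mathrm{Sym}^2M^*\otimes N\cong\mathrm{Hom}_R(\mathrm{Sym}_2M,N)$ (where $\mathrm{Sym}_2M\subset M^{\otimes2}$ is the submodule of symmetric tensors) is the homomorphism determined, on each open where $M$ is free with basis $m_1,m_2$, by $m_i\otimes m_i\mapsto q(m_i)$ and $m_1\otimes m_2+m_2\otimes m_1\mapsto B(m_1,m_2)$; equivalently $q(m)$ is the value of $f$ on $m\otimes m$. A linear binary quadratic form $f\in\mathrm{Sym}^2V\otimes L$ ($V$ locally free of rank 2, $L$ locally free of rank 1) is primitive if on every open where $V$ has basis $x,y$ and $L$ has basis $z$, writing $f=ax^2z+bxyz+cy^2z$, the elements $a,b,c$ generate the unit ideal; here $V=M^*$, $L=N$. *)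

theory Defs
  imports Main "HOL.Modules"
begin

text \<open>Localization at an element s of R is written out elementwise:
x/1 = y/1 in M_s iff s^n (x - y) = 0 for some n.\<close>

definition loc_eq :: "('r::comm_ring_1 \<Rightarrow> 'm::ab_group_add \<Rightarrow> 'm) \<Rightarrow> 'r \<Rightarrow> 'm \<Rightarrow> 'm \<Rightarrow> bool" where
  "loc_eq sc s x y \<longleftrightarrow> (\<exists>n::nat. sc (s ^ n) (x - y) = 0)"

text \<open>m1/1, m2/1 form a basis of the localized module M_s (free of rank 2).\<close>
definition loc_basis2 :: "('r::comm_ring_1 \<Rightarrow> 'm::ab_group_add \<Rightarrow> 'm) \<Rightarrow> 'r \<Rightarrow> 'm \<Rightarrow> 'm \<Rightarrow> bool" where
  "loc_basis2 sc s m1 m2 \<longleftrightarrow>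
     (\<forall>m. \<exists>(n::nat) a b. sc (s ^ n) m = sc a m1 + sc b m2) \<and>
     (\<forall>a b. sc a m1 + sc b m2 = 0 \<longrightarrow> (\<exists>n::nat. s ^ n * a = 0 \<and> s ^ n * b = 0))"

text \<open>z/1 forms a basis of the localized module N_s (free of rank 1).\<close>
definition loc_basis1 :: "('r::comm_ring_1 \<Rightarrow> 'm::ab_group_add \<Rightarrow> 'm) \<Rightarrow> 'r \<Rightarrow> 'm \<Rightarrow> bool" where
  "loc_basis1 sc s z \<longleftrightarrow>
     (\<forall>m. \<exists>(n::nat) a. sc (s ^ n) m = sc a z) \<and>
     (\<forall>a. sc a z = 0 \<longrightarrow> (\<exists>n::nat. s ^ n * a = 0))"

definition locally_free_rank2 :: "('r::comm_ring_1 \<Rightarrow> 'm::ab_group_add \<Rightarrow> 'm) \<Rightarrow> bool" where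
  "locally_free_rank2 sc \<longleftrightarrow> (\<exists>S. finite S \<and> module.span ((*) :: 'r \<Rightarrow> 'r \<Rightarrow> 'r) S = UNIV \<and>
      (\<forall>s\<in>S. \<exists>m1 m2. loc_basis2 sc s m1 m2))"

definition locally_free_rank1 :: "('r::comm_ring_1 \<Rightarrow> 'm::ab_group_add \<Rightarrow> 'm) \<Rightarrow> bool" where
  "locally_free_rank1 sc \<longleftrightarrow> (\<exists>S. finite S \<and> module.span ((*) :: 'r \<Rightarrow> 'r \<Rightarrow> 'r) S = UNIV \<and>
      (\<forall>s\<in>S. \<exists>z. loc_basis1 sc s z))"

definition polar :: "('m::ab_group_add \<Rightarrow> 'n::ab_group_add) \<Rightarrow> 'm \<Rightarrow> 'm \<Rightarrow> 'n" where
  "polar q x y = q (x + y) - q x - q y"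

definition quadratic_map ::
  "('r::comm_ring_1 \<Rightarrow> 'm::ab_group_add \<Rightarrow> 'm) \<Rightarrow> ('r \<Rightarrow> 'n::ab_group_add \<Rightarrow> 'n) \<Rightarrow> ('m \<Rightarrow> 'n) \<Rightarrow> bool" where
  "quadratic_map sM sN q \<longleftrightarrow>
     (\<forall>r m. q (sM r m) = sN (r ^ 2) (q m)) \<and>
     (\<forall>x y z. polar q (x + y) z = polar q x z + polar q y z) \<and>
     (\<forall>x y z. polar q x (y + z) = polar q x y + polar q x z) \<and>
     (\<forall>r x y. polar q (sM r x) y = sN r (polar q x y)) \<and>
     (\<forall>r x y. polar q x (sM r y) = sN r (polar q x y))"

definition kneser_primitive :: "('r::comm_ring_1 \<Rightarrow> 'n::ab_group_add \<Rightarrow> 'n) \<Rightarrow> ('m \<Rightarrow> 'n) \<Rightarrow> bool" where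
  "kneser_primitive sN q \<longleftrightarrow> module.span sN (range q) = UNIV"

text \<open>On the basic open D(s), if m1,m2 is a basis of M_s (dual basis x,y of M^*_s) and z is a
basis of N_s, then f = a x^2 z + b x y z + c y^2 z with a z = f(m1 (x) m1) = q(m1),
b z = f(m1 (x) m2 + m2 (x) m1) = B(m1,m2), c z = f(m2 (x) m2) = q(m2) in N_s.
Writing a = a'/s^t etc. (a',b',c' in R), the ideal (a,b,c) of R_s is the unit ideal iff
some power of s lies in the ideal (a',b',c') of R.\<close>
definition linear_form_primitive ::
  "('r::comm_ring_1 \<Rightarrow> 'm::ab_group_add \<Rightarrow> 'm) \<Rightarrow> ('r \<Rightarrow> 'n::ab_group_add \<Rightarrow> 'n) \<Rightarrow> ('m \<Rightarrow> 'n) \<Rightarrow> bool" where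
  "linear_form_primitive sM sN q \<longleftrightarrow>
     (\<forall>s m1 m2 z a b c (t::nat).
        loc_basis2 sM s m1 m2 \<and> loc_basis1 sN s z \<and>
        loc_eq sN s (sN (s ^ t) (q m1)) (sN a z) \<and>
        loc_eq sN s (sN (s ^ t) (polar q m1 m2)) (sN b z) \<and>
        loc_eq sN s (sN (s ^ t) (q m2)) (sN c z)
        \<longrightarrow> (\<exists>(n::nat) u v w. s ^ n = u * a + v * b + w * c))"

end

theory Submission imports Defs begin
lemma mod_times: "module ((*) :: 'r::comm_ring_1 \<Rightarrow> 'r \<Rightarrow> 'r)"
  by unfold_locales (auto simp: algebra_simps)

context module begin

lemma loc_eq_refl: "loc_eq scale s x x"
  unfolding loc_eq_def by (rule exI[of _ 0]) simp

lemma loc_eq_eq: "x = y \<Longrightarrow> loc_eq scale s x y"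
  using loc_eq_refl by simp

lemma loc_eq_add:
  assumes "loc_eq scale s x1 y1" "loc_eq scale s x2 y2"
  shows "loc_eq scale s (x1 + x2) (y1 + y2)"
proof -
  obtain n1 where n1: "scale (s^n1) (x1 - y1) = 0" using assms(1) unfolding loc_eq_def by blast
  obtain n2 where n2: "scale (s^n2) (x2 - y2) = 0" using assms(2) unfolding loc_eq_def by blast
  have "scale (s^(n1+n2)) ((x1 + x2) - (y1 + y2))
      = scale (s^n2) (scale (s^n1) (x1 - y1)) + scale (s^n1) (scale (s^n2) (x2 - y2))"
    by (simp add: power_add algebra_simps mult.commute)
  also have "\<dots> = 0" using n1 n2 by simp
  finally show ?thesis unfolding loc_eq_def by blast
qed

lemma loc_eq_scale:
  assumes "loc_eq scale s x y"
  shows "loc_eq scale s (scale r x) (scale r y)"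
proof -
  obtain n where n: "scale (s^n) (x - y) = 0" using assms unfolding loc_eq_def by blast
  have "scale (s^n) (scale r x - scale r y) = scale r (scale (s^n) (x - y))"
    by (simp add: algebra_simps mult.commute)
  then show ?thesis unfolding loc_eq_def using n by auto
qed

lemma loc_eq_trans:
  assumes "loc_eq scale s x y" "loc_eq scale s y w"
  shows "loc_eq scale s x w"
proof -
  have "loc_eq scale s (x + y) (y + w)" by (rule loc_eq_add[OF assms])
  then show ?thesis unfolding loc_eq_def by (simp add: algebra_simps)
qed

lemma basis2_mult:
  assumes "loc_basis2 scale s m1 m2" shows "loc_basis2 scale (s*u) m1 m2"
  unfolding loc_basis2_def
proof safe
  fix m
  obtain n a b where "scale (s^n) m = scale a m1 + scale b m2" using assms unfolding loc_basis2_def by blast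
  then have "scale ((s*u)^n) m = scale (u^n*a) m1 + scale (u^n*b) m2"
    by (metis power_mult_distrib scale_right_distrib scale_scale mult.commute)
  then show "\<exists>n a b. scale ((s*u)^n) m = scale a m1 + scale b m2" by blast
next
  fix a b assume "scale a m1 + scale b m2 = 0"
  then obtain n where "s^n * a = 0" "s^n*b = 0" using assms unfolding loc_basis2_def by blast
  then have "(s*u)^n * a = 0 \<and> (s*u)^n*b = 0" by (metis power_mult_distrib mult.assoc mult.commute mult_zero_right)
  then show "\<exists>n. (s*u)^n * a = 0 \<and> (s*u)^n*b = 0" by blast
qed

lemma basis1_mult:
  assumes "loc_basis1 scale s z" shows "loc_basis1 scale (s*u) z"
  unfolding loc_basis1_def
proof safe
  fix m
  obtain n a where "scale (s^n) m = scale a z" using assms unfolding loc_basis1_def by blast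
  then have "scale ((s*u)^n) m = scale (u^n*a) z"
    by (metis power_mult_distrib scale_scale mult.commute)
  then show "\<exists>n a. scale ((s*u)^n) m = scale a z" by blast
next
  fix a assume "scale a z = 0"
  then obtain n where "s^n * a = 0" using assms unfolding loc_basis1_def by blast
  then have "(s*u)^n * a = 0" by (metis power_mult_distrib mult.assoc mult.commute mult_zero_right)
  then show "\<exists>n. (s*u)^n * a = 0" by blast
qed

end

lemma sum_closed:
  assumes "P 0" "\<And>x y. P x \<Longrightarrow> P y \<Longrightarrow> P (x + y)" "finite A" "\<And>k. k \<in> A \<Longrightarrow> P (f k)"
  shows "P (sum f A)"
  using assms(3,4) by (induction A rule: finite_induct) (auto intro: assms(1,2))

lemma rad_add:
  fixes a b :: "'r::comm_ring_1"
  assumes P0: "P 0" and Padd: "\<And>x y. P x \<Longrightarrow> P y \<Longrightarrow> P (x + y)"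
    and Pmul: "\<And>r x. P x \<Longrightarrow> P (r * x)"
    and A: "P (a^e1)" and B: "P (b^e2)"
  shows "P ((a+b)^(e1+e2))"
proof -
  have "(a+b)^(e1+e2) = (\<Sum>k\<le>e1+e2. of_nat ((e1+e2) choose k) * a ^ k * b ^ (e1+e2 - k))"
    by (rule binomial_ring)
  also have "P \<dots>"
  proof (rule sum_closed[where P=P])
    fix k assume "k \<in> {..e1+e2}"
    show "P (of_nat ((e1+e2) choose k) * a ^ k * b ^ (e1+e2 - k))"
    proof (cases "e1 \<le> k")
      case True
      then have "a^k = a^(k-e1) * a^e1" by (simp add: power_add[symmetric])
      then have "of_nat ((e1+e2) choose k) * a ^ k * b ^ (e1+e2 - k)
         = (of_nat ((e1+e2) choose k) * a^(k-e1) * b ^ (e1+e2 - k)) * a^e1" by (simp add: ac_simps)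
      then show ?thesis using Pmul[OF A] by simp
    next
      case False
      then have "b^(e1+e2-k) = b^(e1+e2-k-e2) * b^e2" by (simp add: power_add[symmetric])
      then have "of_nat ((e1+e2) choose k) * a ^ k * b ^ (e1+e2 - k)
         = (of_nat ((e1+e2) choose k) * a^k * b ^ (e1+e2 - k - e2)) * b^e2" by (simp add: ac_simps)
      then show ?thesis using Pmul[OF B] by simp
    qed
  qed (auto intro: P0 Padd)
  finally show ?thesis .
qed

lemma rad_span:
  fixes x :: "'r::comm_ring_1"
  assumes P0: "P 0" and Padd: "\<And>x y. P x \<Longrightarrow> P y \<Longrightarrow> P (x + y)"
    and Pmul: "\<And>r x. P x \<Longrightarrow> P (r * x)"
    and x: "x \<in> module.span (*) U" and U: "\<And>u. u \<in> U \<Longrightarrow> \<exists>e. P (u^e)"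
  shows "\<exists>e. P (x^e)"
proof -
  interpret R: module "(*) :: 'r \<Rightarrow> 'r \<Rightarrow> 'r" by (rule mod_times)
  show ?thesis using x
  proof (induction rule: R.span_induct_alt)
    case base then show ?case using P0 by (intro exI[of _ 1]) simp
  next
    case (step c u y)
    obtain e1 where e1: "P (u^e1)" using U step.hyps(1) by blast
    obtain e2 where e2: "P (y^e2)" using step.IH by blast
    have "P ((c*u)^e1)" using Pmul[OF e1, of "c^e1"] by (simp add: power_mult_distrib)
    from rad_add[where P=P, OF P0 Padd Pmul this e2] show ?case by blast
  qed
qed

lemma one_from_rad:
  fixes U :: "'r::comm_ring_1 set"
  assumes P0: "P 0" and Padd: "\<And>x y. P x \<Longrightarrow> P y \<Longrightarrow> P (x + y)"
    and Pmul: "\<And>r x. P x \<Longrightarrow> P (r * x)"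
    and sp: "module.span (*) U = UNIV" and U: "\<And>u. u \<in> U \<Longrightarrow> \<exists>e. P (u^e)"
  shows "P 1"
  using rad_span[where P=P and x=1, OF P0 Padd Pmul _ U] sp by auto

lemma quad_expand:
  assumes "module sM" "module sN" "quadratic_map sM sN q"
  shows "q (sM A m1 + sM B m2) = sN (A^2) (q m1) + sN (A*B) (polar q m1 m2) + sN (B^2) (q m2)"
proof -
  interpret N: module sN by fact
  have Q: "\<And>r m. q (sM r m) = sN (r ^ 2) (q m)"
    and P1: "\<And>r x y. polar q (sM r x) y = sN r (polar q x y)"
    and P2: "\<And>r x y. polar q x (sM r y) = sN r (polar q x y)"
    using assms(3) unfolding quadratic_map_def by auto
  have "q (sM A m1 + sM B m2) = q (sM A m1) + q (sM B m2) + polar q (sM A m1) (sM B m2)"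
    by (simp add: polar_def)
  also have "polar q (sM A m1) (sM B m2) = sN (A*B) (polar q m1 m2)"
    by (simp add: P1 P2 mult.commute)
  finally show ?thesis by (simp add: Q algebra_simps)
qed

lemma polar_in_span:
  assumes "module sN"
  shows "polar q x y \<in> module.span sN (range q)"
proof -
  interpret N: module sN by fact
  show ?thesis unfolding polar_def
    by (intro N.span_diff N.span_base) auto
qed

theorem proposition6p2:
  fixes sM :: "'r::comm_ring_1 \<Rightarrow> 'm::ab_group_add \<Rightarrow> 'm"
    and sN :: "'r \<Rightarrow> 'n::ab_group_add \<Rightarrow> 'n"
    and q :: "'m \<Rightarrow> 'n"
  assumes "module sM" and "module sN"
    and "locally_free_rank2 sM" and "locally_free_rank1 sN"
    and "quadratic_map sM sN q"
  shows "kneser_primitive sN q \<longleftrightarrow> linear_form_primitive sM sN q"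
proof
  interpret M: module sM by fact
  interpret N: module sN by fact
  assume kp: "kneser_primitive sN q"
  show "linear_form_primitive sM sN q"
    unfolding linear_form_primitive_def
  proof (intro allI impI, elim conjE)
    fix s m1 m2 z a b c and t :: nat
    assume b2: "loc_basis2 sM s m1 m2" and b1: "loc_basis1 sN s z"
      and ea: "loc_eq sN s (sN (s ^ t) (q m1)) (sN a z)"
      and eb: "loc_eq sN s (sN (s ^ t) (polar q m1 m2)) (sN b z)"
      and ec: "loc_eq sN s (sN (s ^ t) (q m2)) (sN c z)"
    define I where "I e \<longleftrightarrow> (\<exists>\<alpha> \<beta> \<gamma>. e = \<alpha>*a + \<beta>*b + \<gamma>*c)" for e
    define h where "h y \<longleftrightarrow> (\<exists>K e. I e \<and> loc_eq sN s (sN (s^K) y) (sN e z))" for y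
    have base: "\<exists>D E. I E \<and> loc_eq sN s (sN (s^D) (q w)) (sN E z)" for w
    proof -
      obtain n0 A B where nab: "sM (s^n0) w = sM A m1 + sM B m2"
        using b2 unfolding loc_basis2_def by blast
      have "sN (s^(t + 2*n0)) (q w) = sN (s^t) (q (sM (s^n0) w))"
        using assms(5) unfolding quadratic_map_def by (simp add: power_add power_mult mult.commute)
      also have "\<dots> = sN (A^2) (sN (s^t) (q m1)) + sN (A*B) (sN (s^t) (polar q m1 m2))
                   + sN (B^2) (sN (s^t) (q m2))"
        unfolding nab quad_expand[OF assms(1,2,5)] by (simp add: algebra_simps mult.commute)
      finally have eq: "sN (s^(t + 2*n0)) (q w) = \<dots>" .
      have "loc_eq sN s (sN (A^2) (sN (s^t) (q m1)) + sN (A*B) (sN (s^t) (polar q m1 m2))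
                   + sN (B^2) (sN (s^t) (q m2)))
              (sN (A^2) (sN a z) + sN (A*B) (sN b z) + sN (B^2) (sN c z))"
        by (intro N.loc_eq_add N.loc_eq_scale ea eb ec)
      moreover have "sN (A^2) (sN a z) + sN (A*B) (sN b z) + sN (B^2) (sN c z)
           = sN (A^2*a + A*B*b + B^2*c) z" by (simp add: algebra_simps)
      ultimately have "loc_eq sN s (sN (s^(t + 2*n0)) (q w)) (sN (A^2*a + A*B*b + B^2*c) z)"
        using eq by simp
      moreover have "I (A^2*a + A*B*b + B^2*c)" unfolding I_def by blast
      ultimately show ?thesis by blast
    qed
    have z: "z \<in> N.span (range q)" using kp unfolding kneser_primitive_def by auto
    have "h z" using z
    proof (induction rule: N.span_induct_alt)
      case base
      have "I 0" unfolding I_def by (intro exI[of _ 0]) simp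
      then show ?case unfolding h_def by (intro exI[of _ 0] exI[of _ 0]) (simp add: N.loc_eq_refl)
    next
      case (step r x y)
      obtain w where xw: "x = q w" using step.hyps by blast
      obtain D E where E: "I E" and DE: "loc_eq sN s (sN (s^D) (q w)) (sN E z)" using base by blast
      obtain K e where e: "I e" and Ke: "loc_eq sN s (sN (s^K) y) (sN e z)"
        using step.IH unfolding h_def by blast
      have "sN (s^(D+K)) (sN r x + y) = sN (r*s^K) (sN (s^D) (q w)) + sN (s^D) (sN (s^K) y)"
        by (simp add: xw algebra_simps power_add mult.commute mult.left_commute)
      moreover have "loc_eq sN s (sN (r*s^K) (sN (s^D) (q w)) + sN (s^D) (sN (s^K) y))
            (sN (r*s^K) (sN E z) + sN (s^D) (sN e z))"
        by (intro N.loc_eq_add N.loc_eq_scale DE Ke)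
      moreover have "sN (r*s^K) (sN E z) + sN (s^D) (sN e z) = sN (r*s^K*E + s^D*e) z"
        by (simp add: algebra_simps)
      moreover have "I (r*s^K*E + s^D*e)"
      proof -
        obtain \<alpha> \<beta> \<gamma> where 1: "E = \<alpha>*a + \<beta>*b + \<gamma>*c" using E unfolding I_def by blast
        obtain \<alpha>' \<beta>' \<gamma>' where 2: "e = \<alpha>'*a + \<beta>'*b + \<gamma>'*c" using e unfolding I_def by blast
        have "r*s^K*E + s^D*e = (r*s^K*\<alpha> + s^D*\<alpha>')*a + (r*s^K*\<beta> + s^D*\<beta>')*b + (r*s^K*\<gamma> + s^D*\<gamma>')*c"
          unfolding 1 2 by (simp add: algebra_simps)
        then show ?thesis unfolding I_def by blast
      qed
      ultimately show ?case unfolding h_def by metis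
    qed
    then obtain K e where e: "I e" and Ke: "loc_eq sN s (sN (s^K) z) (sN e z)"
      unfolding h_def by blast
    obtain p where "sN (s^p) (sN (s^K) z - sN e z) = 0" using Ke unfolding loc_eq_def by blast
    then have "sN (s^p * (s^K - e)) z = 0" by (simp add: algebra_simps)
    then obtain n where "s^n * (s^p * (s^K - e)) = 0" using b1 unfolding loc_basis1_def by blast
    then have eq: "s^(n+p+K) = s^(n+p) * e" by (simp add: algebra_simps power_add)
    obtain \<alpha> \<beta> \<gamma> where "e = \<alpha>*a + \<beta>*b + \<gamma>*c" using e unfolding I_def by blast
    then have "s^(n+p+K) = (s^(n+p)*\<alpha>)*a + (s^(n+p)*\<beta>)*b + (s^(n+p)*\<gamma>)*c"
      using eq by (simp add: algebra_simps)
    then show "\<exists>n u v w. s ^ n = u * a + v * b + w * c" by blast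
  qed
next
  interpret M: module sM by fact
  interpret N: module sN by fact
  assume lp: "linear_form_primitive sM sN q"
  obtain SM where SM: "finite SM" "module.span (*) SM = UNIV" "\<forall>s\<in>SM. \<exists>m1 m2. loc_basis2 sM s m1 m2"
    using assms(3) unfolding locally_free_rank2_def by blast
  obtain SN where SN: "finite SN" "module.span (*) SN = UNIV" "\<forall>s\<in>SN. \<exists>z. loc_basis1 sN s z"
    using assms(4) unfolding locally_free_rank1_def by blast
  show "kneser_primitive sN q"
    unfolding kneser_primitive_def
  proof (intro set_eqI iffI)
    fix y :: 'n
    assume "y \<in> UNIV"
    define J where "J r \<longleftrightarrow> sN r y \<in> N.span (range q)" for r
    have J0: "J 0" unfolding J_def by (simp add: N.span_zero)
    have Jadd: "J x \<Longrightarrow> J x' \<Longrightarrow> J (x + x')" for x x'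
      unfolding J_def by (simp add: N.scale_left_distrib N.span_add)
    have Jmul: "J x \<Longrightarrow> J (r * x)" for r x
      unfolding J_def using N.span_scale[of "sN x y" _ r] by simp
    have key: "\<exists>e. J (w^e)" if w: "\<exists>m1 m2. loc_basis2 sM w m1 m2" "\<exists>z. loc_basis1 sN w z" for w
    proof -
      obtain m1 m2 where b2: "loc_basis2 sM w m1 m2" using w by blast
      obtain z where b1: "loc_basis1 sN w z" using w by blast
      obtain n1 a where a: "sN (w^n1) (q m1) = sN a z" using b1 unfolding loc_basis1_def by blast
      obtain n2 b where b: "sN (w^n2) (polar q m1 m2) = sN b z" using b1 unfolding loc_basis1_def by blast
      obtain n3 c where c: "sN (w^n3) (q m2) = sN c z" using b1 unfolding loc_basis1_def by blast
      define t where "t = n1 + n2 + n3"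
      have ea: "sN (w^t) (q m1) = sN (w^(n2+n3)*a) z"
        using arg_cong[OF a, of "sN (w^(n2+n3))"] by (simp add: t_def power_add ac_simps)
      have eb: "sN (w^t) (polar q m1 m2) = sN (w^(n1+n3)*b) z"
        using arg_cong[OF b, of "sN (w^(n1+n3))"] by (simp add: t_def power_add ac_simps)
      have ec: "sN (w^t) (q m2) = sN (w^(n1+n2)*c) z"
        using arg_cong[OF c, of "sN (w^(n1+n2))"] by (simp add: t_def power_add ac_simps)
      obtain n u v x where nuv: "w^n = u * (w^(n2+n3)*a) + v * (w^(n1+n3)*b) + x * (w^(n1+n2)*c)"
        using lp b2 b1 N.loc_eq_eq[OF ea] N.loc_eq_eq[OF eb] N.loc_eq_eq[OF ec]
        unfolding linear_form_primitive_def by blast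
      have "sN (w^n) z = sN u (sN (w^t) (q m1)) + sN v (sN (w^t) (polar q m1 m2)) + sN x (sN (w^t) (q m2))"
        unfolding ea eb ec nuv by (simp add: algebra_simps)
      also have "\<dots> \<in> N.span (range q)"
        by (intro N.span_add N.span_scale N.span_base polar_in_span[OF assms(2)]) auto
      finally have zs: "sN (w^n) z \<in> N.span (range q)" .
      obtain k d where "sN (w^k) y = sN d z" using b1 unfolding loc_basis1_def by blast
      then have "sN (w^(k+n)) y = sN d (sN (w^n) z)"
        by (metis N.scale_scale power_add mult.commute)
      also have "\<dots> \<in> N.span (range q)" by (rule N.span_scale[OF zs])
      finally show ?thesis unfolding J_def by blast
    qed
    have "J 1"
    proof (rule one_from_rad[where P=J and U=SN, OF J0 Jadd Jmul SN(2)])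
      fix u assume u: "u \<in> SN"
      define J' where "J' r \<longleftrightarrow> (\<exists>e. J (u^e * r))" for r
      have "J' 1"
      proof (rule one_from_rad[where P=J' and U=SM, OF _ _ _ SM(2)])
        show "J' 0" unfolding J'_def using J0 by simp
        show "J' (x + x')" if h12: "J' x" "J' x'" for x x'
        proof -
          obtain e1 e2 where 1: "J (u^e1 * x)" and 2: "J (u^e2 * x')" using h12 unfolding J'_def by blast
          have "u^(e1+e2) * (x + x') = u^e2 * (u^e1 * x) + u^e1 * (u^e2 * x')"
            by (simp add: algebra_simps power_add)
          then have "J (u^(e1+e2) * (x + x'))" using Jadd Jmul 1 2 by metis
          then show ?thesis unfolding J'_def by blast
        qed
        show "J' (r * x)" if h1: "J' x" for r x
        proof -
          obtain e1 where 1: "J (u^e1 * x)" using h1 unfolding J'_def by blast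
          have "u^e1 * (r * x) = r * (u^e1 * x)" by (simp add: ac_simps)
          then show ?thesis unfolding J'_def using Jmul[OF 1, of r] by metis
        qed
        fix v assume v: "v \<in> SM"
        have "\<exists>e. J ((u*v)^e)"
        proof (rule key)
          show "\<exists>m1 m2. loc_basis2 sM (u*v) m1 m2"
            using SM(3) v M.basis2_mult[of v _ _ u] by (metis mult.commute)
          show "\<exists>z. loc_basis1 sN (u*v) z"
            using SN(3) u N.basis1_mult by blast
        qed
        then obtain e where "J ((u*v)^e)" by blast
        then have "J (u^e * v^e)" by (simp add: power_mult_distrib)
        then show "\<exists>e. J' (v^e)" unfolding J'_def by blast
      qed
      then show "\<exists>e. J (u^e)" unfolding J'_def by simp
    qed
    then show "y \<in> N.span (range q)" unfolding J_def by simp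
  qed simp
qed

end
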